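(* Consider the following two-bidder auction. A single good has common value $v$ with CDF $F_v$, density $f_v$, support $\mathbb{R}_+$ and finite mean, and $\mathbb{E}[v]>L\ge 0$. Alice submits a bid knowing only $F_v$; then $v$ is realized and Bob, observing $v$ but not Alice's bid, submits a bid. The highest bid wins and pays its bid (payoff $v$ minus bid) unless it is strictly below the limit price $L$, in which case the good is unsold. If the bids tie, Bob wins; if Bob's bid equals $L$ he can win; a winning bid of Alice equal exactly to $L$ results in no sale. Then there is no (perfect Bayesian Nash) equilibrium in which Alice uses a pure strategy.
   Context: Bidders are risk neutral. *)

theory Defs
  imports "HOL-Probability.Probability"
begin

definition bob_wins :: "real \<Rightarrow> real \<Rightarrow> real \<Rightarrow> bool" where
  "bob_wins L a b \<longleftrightarrow> b \<ge> a \<and> b \<ge> L"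

definition alice_wins :: "real \<Rightarrow> real \<Rightarrow> real \<Rightarrow> bool" where
  "alice_wins L a b \<longleftrightarrow> a > b \<and> a > L"

definition payA :: "real \<Rightarrow> real \<Rightarrow> real \<Rightarrow> real \<Rightarrow> real" where
  "payA L a b v = (if alice_wins L a b then v - a else 0)"

definition payB :: "real \<Rightarrow> real \<Rightarrow> real \<Rightarrow> real \<Rightarrow> real" where
  "payB L a b v = (if bob_wins L a b then v - b else 0)"

definition value_dist :: "(real \<Rightarrow> real) \<Rightarrow> real measure" where
  "value_dist f = density lborel (\<lambda>x. ennreal (f x))"

text \<open>Alice's expected payoff from the pure bid a, when Bob uses the
  (behaviour / mixed) strategy \<sigma>: value v \<mapsto> distribution of Bob's bid.\<close>
definition EU_A :: "(real \<Rightarrow> real) \<Rightarrow> real \<Rightarrow> (real \<Rightarrow> real measure) \<Rightarrow> real \<Rightarrow> real" where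
  "EU_A f L \<sigma> a = (\<integral>v. (\<integral>b. payA L a b v \<partial>(\<sigma> v)) \<partial>(value_dist f))"

text \<open>Bob, not observing
  Alice's bid, correctly believes it to be a, and must be optimal at every
  information set v in the support; Alice's bid must be optimal given \<sigma>.\<close>
definition pbne_alice_pure ::
  "(real \<Rightarrow> real) \<Rightarrow> real \<Rightarrow> real \<Rightarrow> (real \<Rightarrow> real measure) \<Rightarrow> bool" where
  "pbne_alice_pure f L a \<sigma> \<longleftrightarrow>
     a \<ge> 0 \<and>
     \<sigma> \<in> borel \<rightarrow>\<^sub>M prob_algebra borel \<and>
     (\<forall>v. AE b in \<sigma> v. b \<ge> 0) \<and>
     (\<forall>v\<ge>0. integrable (\<sigma> v) (\<lambda>b. payB L a b v) \<and>
        (\<forall>b'\<ge>0. (\<integral>b. payB L a b v \<partial>(\<sigma> v)) \<ge> payB L a b' v)) \<and>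
     (\<forall>a'\<ge>0. EU_A f L \<sigma> a \<ge> EU_A f L \<sigma> a')"

end

theory Submission
  imports Defs
begin

lemma payA_ind: "payA L x b v = indicator {b. b < x \<and> L < x} b * (v - x)"
  by (auto simp: payA_def alice_wins_def indicator_def)

lemma meas_set: "{b::real. b < x \<and> L < x} \<in> sets borel"
  by measurable

lemma payB_le: "payB L a b v \<le> max (v - max a L) 0"
  by (auto simp: payB_def bob_wins_def)

lemma payB_at: "payB L a (max a L) v = v - max a L"
  by (auto simp: payB_def bob_wins_def)

lemma payB_zero: "v < max a L \<Longrightarrow> 0 \<le> v \<Longrightarrow> payB L a 0 v = 0"
  by (auto simp: payB_def bob_wins_def)

lemma pointA: "payB L a b v = max (v - max a L) 0 \<Longrightarrow>
   payA L a b v = (v - a) * indicator {v. v < a \<and> L < a} v"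
  by (auto simp: payB_def bob_wins_def payA_def alice_wins_def indicator_def split: if_splits)

lemma pointA': "payB L a b v = max (v - max a L) 0 \<Longrightarrow> a' > max a L \<Longrightarrow>
   payA L a' b v = v - a'"
  by (auto simp: payB_def bob_wins_def payA_def alice_wins_def indicator_def split: if_splits)

theorem lemma1:
  fixes f :: "real \<Rightarrow> real" and L :: real
  assumes f_meas: "f \<in> borel_measurable borel"
    and f_nonneg: "\<And>x. f x \<ge> 0"
    and prob: "prob_space (value_dist f)"
    and supp_nonneg: "\<And>x. x < 0 \<Longrightarrow> f x = 0"
    and supp_full: "\<And>x e. x \<ge> 0 \<Longrightarrow> e > 0 \<Longrightarrow> measure (value_dist f) {x - e <..< x + e} > 0"
    and mean_finite: "integrable (value_dist f) (\<lambda>v. v)"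
    and mean_gt: "(\<integral>v. v \<partial>(value_dist f)) > L"
    and L_nonneg: "L \<ge> 0"
  shows "\<not> (\<exists>a \<sigma>. pbne_alice_pure f L a \<sigma>)"
proof
  assume "\<exists>a \<sigma>. pbne_alice_pure f L a \<sigma>"
  then obtain a \<sigma> where eq: "pbne_alice_pure f L a \<sigma>" by blast
  let ?\<mu> = "value_dist f"
  let ?m = "max a L"
  have a0: "a \<ge> 0" and \<sigma>m: "\<sigma> \<in> borel \<rightarrow>\<^sub>M prob_algebra borel"
    and Bint: "\<And>v. v \<ge> 0 \<Longrightarrow> integrable (\<sigma> v) (\<lambda>b. payB L a b v)"
    and Bopt: "\<And>v b'. v \<ge> 0 \<Longrightarrow> b' \<ge> 0 \<Longrightarrow> (\<integral>b. payB L a b v \<partial>(\<sigma> v)) \<ge> payB L a b' v"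
    and Aopt: "\<And>a'. a' \<ge> 0 \<Longrightarrow> EU_A f L \<sigma> a \<ge> EU_A f L \<sigma> a'"
    using eq unfolding pbne_alice_pure_def by auto
  interpret P: prob_space ?\<mu> by (rule prob)
  have sv: "prob_space (\<sigma> v) \<and> sets (\<sigma> v) = sets borel" for v
    using measurable_space[OF \<sigma>m, of v] by (simp add: space_prob_algebra)
  have inner: "(\<integral>b. payA L x b v \<partial>(\<sigma> v)) = measure (\<sigma> v) {b. b < x \<and> L < x} * (v - x)" for x v
  proof -
    interpret S: prob_space "\<sigma> v" using sv by blast
    have "(\<integral>b. payA L x b v \<partial>(\<sigma> v)) = (\<integral>b. indicator {b. b < x \<and> L < x} b * (v - x) \<partial>(\<sigma> v))"
      by (simp add: payA_ind)
    also have "\<dots> = (\<integral>b. indicator {b. b < x \<and> L < x} b \<partial>(\<sigma> v)) * (v - x)"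
      by (rule integral_mult_left_zero)
    also have "\<dots> = measure (\<sigma> v) {b. b < x \<and> L < x} * (v - x)"
    proof -
      have "{b. b < x \<and> L < x} \<in> sets (\<sigma> v)" using sv meas_set by auto
      then show ?thesis by (simp add: integral_indicator S.emeasure_eq_measure)
    qed
    finally show ?thesis .
  qed
  have meas_inner: "(\<lambda>v. \<integral>b. payA L x b v \<partial>(\<sigma> v)) \<in> borel_measurable borel" for x
  proof -
    have "(\<lambda>v. measure (\<sigma> v) {b. b < x \<and> L < x}) \<in> borel_measurable borel"
      by (rule measurable_compose[OF \<sigma>m measurable_measure_prob_algebra[OF meas_set]])
    then show ?thesis unfolding inner by measurable
  qed
  have AEB: "AE b in \<sigma> v. payB L a b v = max (v - ?m) 0" if v0: "v \<ge> 0" for v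
  proof -
    interpret S: prob_space "\<sigma> v" using sv by blast
    let ?c = "max (v - ?m) 0"
    have int: "integrable (\<sigma> v) (\<lambda>b. ?c - payB L a b v)"
      using Bint[OF v0] by auto
    have ge: "(\<integral>b. payB L a b v \<partial>(\<sigma> v)) \<ge> ?c"
    proof (cases "v \<ge> ?m")
      case True
      then show ?thesis using Bopt[OF v0, of ?m] a0 L_nonneg payB_at[of L a v] by auto
    next
      case False
      then show ?thesis using Bopt[OF v0, of 0] payB_zero[of v a L] v0 by auto
    qed
    have "(\<integral>b. ?c - payB L a b v \<partial>(\<sigma> v)) = ?c - (\<integral>b. payB L a b v \<partial>(\<sigma> v))"
      using Bint[OF v0] by (simp add: S.prob_space)
    with ge have le: "(\<integral>b. ?c - payB L a b v \<partial>(\<sigma> v)) \<le> 0" by simp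
    have nn: "AE b in \<sigma> v. 0 \<le> ?c - payB L a b v"
      using payB_le[of L a _ v] by auto
    have "(\<integral>b. ?c - payB L a b v \<partial>(\<sigma> v)) = 0"
      using le integral_nonneg_AE[OF nn] by linarith
    then have "AE b in \<sigma> v. ?c - payB L a b v = 0"
      using integral_nonneg_eq_0_iff_AE[OF int nn] by blast
    then show ?thesis by auto
  qed
  have measA: "(\<lambda>b. payA L x b v) \<in> borel_measurable (\<sigma> v)" for x v
    unfolding payA_ind using sv
    by (subst measurable_cong_sets[of _ borel _ borel]) (auto intro: borel_measurable_times meas_set)
  define U where "U v = (v - a) * indicator {v. v < a \<and> L < a} v" for v
  have innerU: "(\<integral>b. payA L a b v \<partial>(\<sigma> v)) = U v" if v0: "v \<ge> 0" for v
  proof -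
    interpret S: prob_space "\<sigma> v" using sv by blast
    have "(\<integral>b. payA L a b v \<partial>(\<sigma> v)) = (\<integral>b. U v \<partial>(\<sigma> v))"
      apply (rule integral_cong_AE[OF measA])
       apply simp
      using AEB[OF v0] by eventually_elim (simp add: pointA U_def)
    then show ?thesis by (simp add: S.prob_space)
  qed
  have innerU': "(\<integral>b. payA L a' b v \<partial>(\<sigma> v)) = v - a'" if v0: "v \<ge> 0" and a': "a' > ?m" for v a'
  proof -
    interpret S: prob_space "\<sigma> v" using sv by blast
    have "(\<integral>b. payA L a' b v \<partial>(\<sigma> v)) = (\<integral>b. v - a' \<partial>(\<sigma> v))"
      apply (rule integral_cong_AE[OF measA])
       apply simp
      using AEB[OF v0] by eventually_elim (simp add: pointA'[OF _ a'])
    then show ?thesis by (simp add: S.prob_space)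
  qed
  have fm: "(\<lambda>x. ennreal (f x)) \<in> borel_measurable borel" using f_meas by measurable
  have AE0: "AE v in ?\<mu>. v \<ge> 0"
    unfolding value_dist_def using fm
    by (subst AE_density) (auto intro!: AE_I2, metis less_irrefl not_le supp_nonneg)
  have Umeas: "U \<in> borel_measurable borel" unfolding U_def by measurable
  have EUa: "EU_A f L \<sigma> a = (\<integral>v. U v \<partial>?\<mu>)"
    unfolding EU_A_def
    apply (rule integral_cong_AE)
    using meas_inner Umeas apply (simp_all add: value_dist_def)
    using AE0 unfolding value_dist_def by eventually_elim (simp add: innerU)
  have EUa': "EU_A f L \<sigma> a' = (\<integral>v. v \<partial>?\<mu>) - a'" if a': "a' > ?m" for a'
  proof -
    have "EU_A f L \<sigma> a' = (\<integral>v. v - a' \<partial>?\<mu>)"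
      unfolding EU_A_def
      apply (rule integral_cong_AE)
      using meas_inner apply (simp_all add: value_dist_def)
      using AE0 unfolding value_dist_def by eventually_elim (simp add: innerU'[OF _ a'])
    also have "\<dots> = (\<integral>v. v \<partial>?\<mu>) - a'"
      using mean_finite by (simp add: P.prob_space)
    finally show ?thesis .
  qed
  have Uint: "integrable ?\<mu> U"
    unfolding U_def
  proof (rule integrable_real_mult_indicator)
    show "{v. v < a \<and> L < a} \<in> sets ?\<mu>" by (simp add: value_dist_def)
    show "integrable ?\<mu> (\<lambda>x. x - a)" using mean_finite by simp
  qed
  have D: "(\<integral>v. v \<partial>?\<mu>) - ?m - (\<integral>v. U v \<partial>?\<mu>) > 0"
  proof (cases "L < a")
    case False
    then have "U = (\<lambda>v. 0)" unfolding U_def by (auto simp: indicator_def)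
    then show ?thesis using False mean_gt by simp
  next
    case True
    define S where "S = {a + 1 - 1/2 <..< a + 1 + 1/2}"
    have Spos: "measure ?\<mu> S > 0" unfolding S_def using a0 by (intro supp_full) auto
    have Smeas: "S \<in> sets ?\<mu>" unfolding S_def value_dist_def by simp
    have "(\<integral>v. v \<partial>?\<mu>) - a - (\<integral>v. U v \<partial>?\<mu>) = (\<integral>v. v - a - U v \<partial>?\<mu>)"
      using mean_finite Uint by (simp add: P.prob_space)
    also have "\<dots> \<ge> (\<integral>v. indicator S v * (1/2) \<partial>?\<mu>)"
    proof (rule integral_mono)
      show "integrable ?\<mu> (\<lambda>v. v - a - U v)" using mean_finite Uint by auto
      show "integrable ?\<mu> (\<lambda>v. indicator S v * (1/2::real))"
        using Smeas by (intro integrable_mult_left integrable_real_indicator) (auto simp: P.emeasure_eq_measure)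
      show "indicator S v * (1/2) \<le> v - a - U v" for v
        using True unfolding U_def S_def by (auto simp: indicator_def)
    qed
    finally have "(\<integral>v. v \<partial>?\<mu>) - a - (\<integral>v. U v \<partial>?\<mu>) \<ge> measure ?\<mu> S * (1/2)"
      using Smeas by (simp add: integral_mult_left_zero)
    then show ?thesis using Spos True by simp
  qed
  define a' where "a' = ?m + ((\<integral>v. v \<partial>?\<mu>) - ?m - (\<integral>v. U v \<partial>?\<mu>)) / 2"
  have a'gt: "a' > ?m" using D unfolding a'_def by simp
  have "EU_A f L \<sigma> a' > EU_A f L \<sigma> a"
    unfolding EUa EUa'[OF a'gt] using D by (simp add: a'_def field_simps)
  moreover have "a' \<ge> 0" using a'gt a0 by simp
  ultimately show False using Aopt by force
qed

end
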